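(* Let $N\ge2$, $M\ge2$ and $Q$ be integers with $1\le Q\le M-1$, write $\mathcal{M}=\{1,\dots,M\}$, let $0<\epsilon<1$, and let $\mathbf{H}_1,\dots,\mathbf{H}_M$ be $N\times N$ real symmetric positive semidefinite matrices. Let $v^{\max}_{\rm QP}$ be the optimal value of (P2): maximize $\|\mathbf{w}\|^2$ over $\mathbf{w}\in\mathbb{R}^N$, $\boldsymbol\beta\in\{0,1\}^M$ subject to $\mathbf{w}^T\mathbf{H}_i\mathbf{w}\le\beta_i\epsilon+(1-\beta_i)$ ($i\in\mathcal{M}$) and $\sum_i\beta_i=Q$; and let $v^{\max}_{\rm SDP}$ be the optimal value of (SDP3): maximize $\mathrm{Tr}[\mathbf{X}]$ over real symmetric $N\times N$ matrices $\mathbf{X}\succeq0$ and $\boldsymbol\beta\in\mathbb{R}^M$ subject to $\mathrm{Tr}[\mathbf{H}_i\mathbf{X}]\le\beta_i\epsilon+(1-\beta_i)$ ($i\in\mathcal{M}$), $\sum_i\beta_i=Q$, $0\le\beta_i\le1$. Then $$v^{\max}_{\rm QP}\ge\frac{\epsilon}{\tilde c(\epsilon)}\cdot\frac{1}{200\ln(50K)}\,v^{\max}_{\rm SDP},$$ where $K=\sum_{i=1}^M\min\{\mathrm{rank}(\mathbf{H}_i),\sqrt{2M}\}$ and $\tilde c(\epsilon)=1-\frac{1-\epsilon}{M-Q+1}$. *)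

theory Defs
  imports "HOL-Analysis.Analysis"
begin

definition psd :: "real^'n^'n \<Rightarrow> bool" where
  "psd A \<longleftrightarrow> transpose A = A \<and> (\<forall>x. 0 \<le> x \<bullet> (A *v x))"

definition vQP :: "(nat \<Rightarrow> real^'n^'n) \<Rightarrow> nat \<Rightarrow> nat \<Rightarrow> real \<Rightarrow> ereal" where
  "vQP H M Q \<epsilon> = (SUP p \<in> {(w :: real^'n, \<beta> :: nat \<Rightarrow> real).
        (\<forall>i\<in>{1..M}. \<beta> i \<in> {0, 1}) \<and>
        (\<forall>i\<in>{1..M}. w \<bullet> (H i *v w) \<le> \<beta> i * \<epsilon> + (1 - \<beta> i)) \<and>
        (\<Sum>i=1..M. \<beta> i) = real Q}.
      ereal ((norm (fst p))\<^sup>2))"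

definition vSDP :: "(nat \<Rightarrow> real^'n^'n) \<Rightarrow> nat \<Rightarrow> nat \<Rightarrow> real \<Rightarrow> ereal" where
  "vSDP H M Q \<epsilon> = (SUP p \<in> {(X :: real^'n^'n, \<beta> :: nat \<Rightarrow> real).
        psd X \<and>
        (\<forall>i\<in>{1..M}. 0 \<le> \<beta> i \<and> \<beta> i \<le> 1) \<and>
        (\<forall>i\<in>{1..M}. trace (H i ** X) \<le> \<beta> i * \<epsilon> + (1 - \<beta> i)) \<and>
        (\<Sum>i=1..M. \<beta> i) = real Q}.
      ereal (trace (fst p)))"

end

theory Submission imports Defs "HOL-Probability.Hoeffding" begin

lemma symm_inner:
  fixes A :: "real^'n^'n"
  assumes "transpose A = A"
  shows "x \<bullet> (A *v y) = (A *v x) \<bullet> y"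
  by (metis assms dot_lmul_matrix transpose_matrix_vector)

lemma spectral_sub:
  fixes A :: "real^'n^'n"
  assumes sym: "transpose A = A"
  shows "subspace S \<Longrightarrow> (\<forall>x\<in>S. A *v x \<in> S) \<Longrightarrow> \<exists>B. B \<subseteq> S \<and> finite B \<and> pairwise orthogonal B \<and>
     (\<forall>u\<in>B. norm u = 1) \<and> (\<forall>u\<in>B. A *v u = (u \<bullet> (A *v u)) *\<^sub>R u) \<and> span B = S"
proof (induct n \<equiv> "dim S" arbitrary: S rule: less_induct)
  case (less S)
  show ?case
  proof (cases "S = {0}")
    case True thus ?thesis by (intro exI[of _ "{}"]) auto
  next
    case False
    then obtain x where x: "x \<in> S" "x \<noteq> 0" using less.prems subspace_0 by blast
    define Sph where "Sph = S \<inter> sphere 0 1"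
    have cS: "compact Sph" unfolding Sph_def
      using compact_Int_closed[OF compact_sphere closed_subspace[OF less.prems(1)], of 0 1]
      by (simp add: inf_commute)
    have "x /\<^sub>R norm x \<in> Sph" unfolding Sph_def using x less.prems(1)
      by (simp add: subspace_scale)
    hence nS: "Sph \<noteq> {}" by blast
    have cf: "continuous_on Sph (\<lambda>x. x \<bullet> (A *v x))"
      by (intro continuous_intros)
    obtain u where u: "u \<in> Sph" and umax: "\<forall>y\<in>Sph. y \<bullet> (A *v y) \<le> u \<bullet> (A *v u)"
      using continuous_attains_sup[OF cS nS cf] by blast
    define l where "l = u \<bullet> (A *v u)"
    have uS: "u \<in> S" and un: "norm u = 1" using u by (auto simp: Sph_def)
    have uu: "u \<bullet> u = 1" using un by (simp add: norm_eq_1)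
    have bnd: "y \<bullet> (A *v y) \<le> l * (y \<bullet> y)" if "y \<in> S" for y
    proof (cases "y = 0")
      case True thus ?thesis by simp
    next
      case False
      have "(y /\<^sub>R norm y) \<in> Sph" using that False less.prems(1)
        by (auto simp: Sph_def subspace_scale)
      hence "(y /\<^sub>R norm y) \<bullet> (A *v (y /\<^sub>R norm y)) \<le> l" using umax l_def by auto
      hence "(y \<bullet> (A *v y)) / (norm y)^2 \<le> l"
        by (simp add: matrix_vector_mult_scaleR power2_eq_square divide_inverse mult_ac)
      thus ?thesis using False by (simp add: divide_le_eq dot_square_norm)
    qed
    define Bv where "Bv = (\<lambda>x. l *\<^sub>R x - A *v x)"
    define v where "v = Bv u"
    have vS: "v \<in> S" unfolding v_def Bv_def
      using less.prems uS by (simp add: subspace_diff subspace_scale)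
    have Bvlin: "Bv (x + t *\<^sub>R y) = Bv x + t *\<^sub>R Bv y" for x y t
      unfolding Bv_def by (simp add: matrix_vector_right_distrib matrix_vector_mult_scaleR algebra_simps)
    have Bsym: "x \<bullet> Bv y = Bv x \<bullet> y" for x y
      unfolding Bv_def using symm_inner[OF sym, of x y] by (simp add: inner_diff_right inner_diff_left inner_commute)
    have uv: "u \<bullet> v = 0" unfolding v_def Bv_def using uu l_def by (simp add: inner_diff_right)
    have quad: "0 \<le> 2 * t * (v \<bullet> v) + t^2 * (v \<bullet> Bv v)" for t
    proof -
      have "u + t *\<^sub>R v \<in> S" using uS vS less.prems(1) by (simp add: subspace_add subspace_scale)
      hence "(u + t *\<^sub>R v) \<bullet> (A *v (u + t *\<^sub>R v)) \<le> l * ((u + t *\<^sub>R v) \<bullet> (u + t *\<^sub>R v))"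
        by (rule bnd)
      hence "0 \<le> (u + t *\<^sub>R v) \<bullet> Bv (u + t *\<^sub>R v)" unfolding Bv_def by (simp add: inner_diff_right)
      also have "\<dots> = (u + t *\<^sub>R v) \<bullet> (v + t *\<^sub>R Bv v)" using Bvlin v_def by simp
      also have "\<dots> = u \<bullet> v + t * (u \<bullet> Bv v) + t * (v \<bullet> v) + t^2 * (v \<bullet> Bv v)"
        by (simp add: inner_add_left inner_add_right algebra_simps power2_eq_square)
      also have "u \<bullet> Bv v = v \<bullet> v" using Bsym[of u v] v_def by (simp add: inner_commute)
      finally show ?thesis using uv by simp
    qed
    have "v \<bullet> v = 0"
    proof -
      define a where "a = v \<bullet> v"
      define b where "b = v \<bullet> Bv v"
      have b0: "b \<ge> 0" using bnd[OF vS] unfolding b_def Bv_def by (simp add: inner_diff_right)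
      have "0 \<le> 2 * (-a/(b+1)) * a + (-a/(b+1))^2 * b" using quad[of "-a/(b+1)"] by (simp add: a_def b_def)
      moreover have "2 * (-a/(b+1)) * a + (-a/(b+1))^2 * b = - (a^2 * (b+2)) / (b+1)^2"
      proof -
        have hb: "b + 1 \<noteq> 0" using b0 by simp
        show ?thesis using hb by (simp add: power2_eq_square divide_simps) (simp add: algebra_simps)
      qed
      ultimately have "0 \<le> - (a^2 * (b+2)) / (b+1)^2" by simp
      hence "a^2 * (b+2) / (b+1)^2 \<le> 0" by simp
      hence "(a^2 * (b+2) / (b+1)^2) * (b+1)^2 \<le> 0" using mult_nonpos_nonneg zero_le_power2 by blast
      moreover have "(b+1)^2 \<noteq> 0" using b0 by simp
      ultimately have "a^2 * (b+2) \<le> 0" by simp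
      hence "a^2 \<le> 0" using b0 by (simp add: mult_le_0_iff)
      thus ?thesis unfolding a_def by simp
    qed
    hence eig: "A *v u = l *\<^sub>R u" unfolding v_def Bv_def by simp
    define S' where "S' = {y\<in>S. u \<bullet> y = 0}"
    have subS': "subspace S'" unfolding S'_def using less.prems(1)
      by (auto simp: subspace_def inner_add_right)
    have invS': "\<forall>y\<in>S'. A *v y \<in> S'"
    proof
      fix y assume "y \<in> S'"
      hence "y \<in> S" "u \<bullet> y = 0" by (auto simp: S'_def)
      moreover have "u \<bullet> (A *v y) = (A *v u) \<bullet> y" using symm_inner[OF sym] .
      ultimately show "A *v y \<in> S'" using less.prems(2) eig by (auto simp: S'_def)
    qed
    have "span S' \<subset> span S"
    proof -
      have "S' \<subseteq> S" by (auto simp: S'_def)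
      moreover have "u \<notin> S'" using uu by (auto simp: S'_def)
      ultimately show ?thesis using uS subS' less.prems(1) by (metis psubsetI span_eq_iff)
    qed
    hence "dim S' < dim S" by (rule dim_psubset)
    then obtain B' where B': "B' \<subseteq> S'" "finite B'" "pairwise orthogonal B'" "\<forall>u\<in>B'. norm u = 1"
        "\<forall>u\<in>B'. A *v u = (u \<bullet> (A *v u)) *\<^sub>R u" "span B' = S'"
      using less.hyps[OF _ subS' invS'] by blast
    have uB': "u \<notin> B'" using B'(1) uu by (auto simp: S'_def)
    show ?thesis
    proof (intro exI[of _ "insert u B'"] conjI)
      show "insert u B' \<subseteq> S" using B'(1) uS by (auto simp: S'_def)
      show "finite (insert u B')" using B' by simp
      show "pairwise orthogonal (insert u B')" using B'(1,3) uB'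
        by (auto simp: pairwise_insert S'_def orthogonal_def inner_commute)
      show "\<forall>w\<in>insert u B'. norm w = 1" using B' un by auto
      show "\<forall>w\<in>insert u B'. A *v w = (w \<bullet> (A *v w)) *\<^sub>R w" using B' eig uu l_def by auto
      show "span (insert u B') = S"
      proof
        show "span (insert u B') \<subseteq> S" using B'(1) uS less.prems(1)
          by (metis \<open>insert u B' \<subseteq> S\<close> span_minimal)
        show "S \<subseteq> span (insert u B')"
        proof
          fix y assume yS: "y \<in> S"
          have "y - (u \<bullet> y) *\<^sub>R u \<in> S'" unfolding S'_def using yS uS less.prems(1) uu
            by (simp add: subspace_diff subspace_scale inner_diff_right)
          hence "y - (u \<bullet> y) *\<^sub>R u \<in> span (insert u B')" using B'(6)
            by (metis span_mono subset_insertI subsetD)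
          moreover have "(u \<bullet> y) *\<^sub>R u \<in> span (insert u B')" by (simp add: span_base span_mul)
          ultimately have "(y - (u \<bullet> y) *\<^sub>R u) + (u \<bullet> y) *\<^sub>R u \<in> span (insert u B')"
            by (rule span_add)
          thus "y \<in> span (insert u B')" by simp
        qed
      qed
    qed
  qed
qed


lemma on_inner_sum:
  fixes F :: "'a::euclidean_space set"
  assumes "finite F" "pairwise orthogonal F" "\<forall>u\<in>F. norm u = 1" "u \<in> F"
  shows "u \<bullet> (\<Sum>v\<in>F. c v *\<^sub>R v) = c u"
proof -
  have "u \<bullet> (\<Sum>v\<in>F. c v *\<^sub>R v) = (\<Sum>v\<in>F. c v * (u \<bullet> v))"
    by (simp add: inner_sum_right)
  also have "\<dots> = c u * (u \<bullet> u) + (\<Sum>v\<in>F-{u}. c v * (u \<bullet> v))"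
    using assms(1,4) by (simp add: sum.remove)
  also have "(\<Sum>v\<in>F-{u}. c v * (u \<bullet> v)) = 0"
    using assms(2,4) by (intro sum.neutral) (auto simp: pairwise_def orthogonal_def)
  also have "u \<bullet> u = 1" using assms(3,4) by (simp add: norm_eq_1)
  finally show ?thesis by simp
qed

lemma on_expand:
  fixes F :: "'a::euclidean_space set"
  assumes "finite F" "pairwise orthogonal F" "\<forall>u\<in>F. norm u = 1" "x \<in> span F"
  shows "x = (\<Sum>u\<in>F. (u \<bullet> x) *\<^sub>R u)"
proof -
  obtain c where c: "x = (\<Sum>v\<in>F. c v *\<^sub>R v)"
    using assms(4) span_finite[OF assms(1)] by auto
  have "u \<bullet> x = c u" if "u \<in> F" for u using on_inner_sum[OF assms(1-3) that] c by simp
  thus ?thesis using c by (metis (no_types, lifting) sum.cong)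
qed

lemma spectral:
  fixes A :: "real^'n^'n"
  assumes sym: "transpose A = A"
  obtains B where "finite B" "pairwise orthogonal B" "\<forall>u\<in>B. norm u = 1"
    "\<forall>u\<in>B. A *v u = (u \<bullet> (A *v u)) *\<^sub>R u" "\<And>x. x = (\<Sum>u\<in>B. (u \<bullet> x) *\<^sub>R u)"
    "\<And>x. A *v x = (\<Sum>u\<in>B. ((u \<bullet> (A *v u)) * (u \<bullet> x)) *\<^sub>R u)"
proof -
  obtain B where B: "finite B" "pairwise orthogonal B" "\<forall>u\<in>B. norm u = 1"
    "\<forall>u\<in>B. A *v u = (u \<bullet> (A *v u)) *\<^sub>R u" "span B = UNIV"
    using spectral_sub[OF sym, of UNIV] by auto
  have ex: "x = (\<Sum>u\<in>B. (u \<bullet> x) *\<^sub>R u)" for x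
    using on_expand[OF B(1-3)] B(5) by auto
  have "A *v x = (\<Sum>u\<in>B. ((u \<bullet> (A *v u)) * (u \<bullet> x)) *\<^sub>R u)" for x
  proof -
    have "A *v x = A *v (\<Sum>u\<in>B. (u \<bullet> x) *\<^sub>R u)" using ex[of x] by simp
    also have "\<dots> = (\<Sum>u\<in>B. (u \<bullet> x) *\<^sub>R (A *v u))"
      by (simp add: matrix_vector_mult_scaleR vec.sum)
    also have "\<dots> = (\<Sum>u\<in>B. ((u \<bullet> (A *v u)) * (u \<bullet> x)) *\<^sub>R u)"
    proof (intro sum.cong refl)
      fix u assume u: "u \<in> B"
      define la where "la = u \<bullet> (A *v u)"
      have e: "A *v u = la *\<^sub>R u" using B(4) u la_def by blast
      show "(u \<bullet> x) *\<^sub>R (A *v u) = ((u \<bullet> (A *v u)) * (u \<bullet> x)) *\<^sub>R u"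
        unfolding la_def[symmetric] e using B(3) u by (simp add: mult.commute norm_eq_1)
    qed
    finally show ?thesis .
  qed
  thus ?thesis using that B ex by blast
qed

lemma trace_axis:
  fixes M :: "real^'n^'n"
  shows "trace M = (\<Sum>i\<in>UNIV. (M *v axis i 1) $ i)"
  unfolding trace_def
  by (simp add: matrix_vector_mult_def axis_def if_distrib cong: if_cong)

lemma trace_spectral:
  fixes X H :: "real^'n^'n"
  assumes "finite B" "\<And>x. X *v x = (\<Sum>u\<in>B. (l u * (u \<bullet> x)) *\<^sub>R u)"
  shows "trace (H ** X) = (\<Sum>u\<in>B. l u * (u \<bullet> (H *v u)))"
proof -
  have "trace (H ** X) = (\<Sum>i\<in>UNIV. (H *v (X *v axis i 1)) $ i)"
    by (simp add: trace_axis matrix_vector_mul_assoc)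
  also have "\<dots> = (\<Sum>i\<in>UNIV. \<Sum>u\<in>B. l u * (u $ i) * ((H *v u) $ i))"
    using assms(2) by (simp add: matrix_vector_mult_scaleR vec.sum inner_axis' inner_axis inner_real_def sum_component mult.assoc)
  also have "\<dots> = (\<Sum>u\<in>B. l u * (\<Sum>i\<in>UNIV. (u $ i) * ((H *v u) $ i)))"
    by (subst sum.swap) (simp add: sum_distrib_left mult.assoc)
  also have "\<dots> = (\<Sum>u\<in>B. l u * (u \<bullet> (H *v u)))"
    by (simp add: inner_vec_def)
  finally show ?thesis .
qed


lemma psd_symm: "psd A \<Longrightarrow> transpose A = A" by (simp add: psd_def)

lemma psd_decomp_on_span:
  fixes H :: "real^'n^'n" and F :: "(real^'n) set"
  assumes H: "psd H" and F: "finite F" "pairwise orthogonal F" "\<forall>u\<in>F. norm u = 1"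
  obtains E :: "(real^'n) set" and \<gamma> :: "real^'n \<Rightarrow> real^'n" where "finite E" "card E \<le> rank H" "card E \<le> card F"
    "\<And>x. x \<in> span F \<Longrightarrow> x \<bullet> (H *v x) = (\<Sum>e\<in>E. (\<gamma> e \<bullet> x)^2)"
proof -
  define P :: "real^'n^'n" where "P = (\<chi> i j. \<Sum>v\<in>F. v$i * v$j)"
  have Pv: "P *v x = (\<Sum>v\<in>F. (v \<bullet> x) *\<^sub>R v)" for x
  proof -
    have "(P *v x)$i = ((\<Sum>v\<in>F. (v \<bullet> x) *\<^sub>R v))$i" for i
    proof -
      have "(P *v x)$i = (\<Sum>j\<in>UNIV. \<Sum>v\<in>F. v$i * (v$j * x$j))"
        by (simp add: P_def matrix_vector_mult_def sum_distrib_right mult.assoc)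
      also have "\<dots> = (\<Sum>v\<in>F. \<Sum>j\<in>UNIV. v$i * (v$j * x$j))" by (rule sum.swap)
      also have "\<dots> = ((\<Sum>v\<in>F. (v \<bullet> x) *\<^sub>R v))$i"
        by (simp add: inner_vec_def sum_component sum_distrib_left sum_distrib_right mult_ac)
      finally show ?thesis .
    qed
    thus ?thesis by (simp add: vec_eq_iff)
  qed
  have Psym: "transpose P = P" unfolding P_def transpose_def
    by (simp add: vec_eq_iff) (metis (no_types, lifting) mult.commute sum.cong)
  have Hsym: "transpose H = H" using H psd_symm by blast
  define G where "G = P ** H ** P"
  have Gsym: "transpose G = G" unfolding G_def
    by (metis matrix_transpose_mul Psym Hsym matrix_mul_assoc)
  have PF: "P *v x = x" if "x \<in> span F" for x
    using on_expand[OF F that] Pv by simp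
  have Gq: "x \<bullet> (G *v x) = (P *v x) \<bullet> (H *v (P *v x))" for x
  proof -
    have "G *v x = P *v (H *v (P *v x))" unfolding G_def by (metis matrix_vector_mul_assoc)
    thus ?thesis using symm_inner[OF Psym, of x] by simp
  qed
  have Gpsd: "0 \<le> x \<bullet> (G *v x)" for x using Gq H by (simp add: psd_def)
  obtain B where B: "finite B" "pairwise orthogonal B" "\<forall>u\<in>B. norm u = 1"
    "\<forall>u\<in>B. G *v u = (u \<bullet> (G *v u)) *\<^sub>R u" "\<And>x. x = (\<Sum>u\<in>B. (u \<bullet> x) *\<^sub>R u)"
    "\<And>x. G *v x = (\<Sum>u\<in>B. ((u \<bullet> (G *v u)) * (u \<bullet> x)) *\<^sub>R u)"
    using spectral[OF Gsym] by blast
  define mu where "mu u = u \<bullet> (G *v u)" for u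
  define E where "E = {u\<in>B. mu u \<noteq> 0}"
  define \<gamma> where "\<gamma> u = sqrt (mu u) *\<^sub>R u" for u
  have finE: "finite E" using B(1) by (simp add: E_def)
  have quadG: "x \<bullet> (G *v x) = (\<Sum>e\<in>E. (\<gamma> e \<bullet> x)^2)" for x
  proof -
    have "x \<bullet> (G *v x) = (\<Sum>u\<in>B. mu u * (u \<bullet> x)^2)"
      unfolding B(6)[of x] mu_def by (simp add: inner_sum_right power2_eq_square mult_ac inner_commute)
    also have "\<dots> = (\<Sum>u\<in>E. mu u * (u \<bullet> x)^2)"
      using B(1) by (intro sum.mono_neutral_right) (auto simp: E_def)
    also have "\<dots> = (\<Sum>e\<in>E. (\<gamma> e \<bullet> x)^2)"
      using Gpsd by (intro sum.cong refl) (simp add: \<gamma>_def mu_def power_mult_distrib)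
    finally show ?thesis .
  qed
  have "card E \<le> rank G"
  proof -
    have "E \<subseteq> range (\<lambda>x. G *v x)"
    proof
      fix u assume "u \<in> E"
      hence uB: "u \<in> B" "mu u \<noteq> 0" by (auto simp: E_def)
      have e: "G *v u = mu u *\<^sub>R u" using B(4) uB(1) unfolding mu_def by blast
      have "G *v ((1 / mu u) *\<^sub>R u) = u" by (simp only: matrix_vector_mult_scaleR e) (simp add: uB)
      thus "u \<in> range (\<lambda>x. G *v x)" by (metis rangeI)
    qed
    moreover have "independent E"
      using B(2,3) by (intro pairwise_orthogonal_independent) (auto simp: E_def pairwise_def)
    ultimately show ?thesis unfolding rank_dim_range by (rule independent_card_le_dim)
  qed
  moreover have "rank G \<le> rank H"
    unfolding G_def by (meson order_trans rank_mul_le_left rank_mul_le_right)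
  moreover have "rank G \<le> rank P"
    unfolding G_def by (metis matrix_mul_assoc rank_mul_le_left)
  moreover have "rank P \<le> card F"
  proof -
    have "P *v x \<in> span F" for x
      unfolding Pv by (rule span_sum, rule span_mul, erule span_base)
    hence "range (\<lambda>x. P *v x) \<subseteq> span F" by blast
    thus ?thesis unfolding rank_dim_range using dim_le_card F(1) by blast
  qed
  moreover have "x \<bullet> (H *v x) = (\<Sum>e\<in>E. (\<gamma> e \<bullet> x)^2)" if "x \<in> span F" for x
    using quadG[of x] Gq[of x] PF[OF that] by simp
  ultimately show ?thesis using that[OF finE] by (meson order_trans)
qed


lemma cosh_bound:
  fixes x :: real
  shows "exp x + exp (-x) \<le> 2 * exp (x^2/2)"
proof -
  have main: "exp y + exp (-y) \<le> 2 * exp (y^2/2)" if "y \<ge> 0" for y :: real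
  proof -
    have "-(2*y) * (1/2) + ln (1 + (1/2) * (exp (2*y) - 1)) \<le> (2*y)^2/8"
      using Hoeffdings_lemma_aux[of "2*y" "1/2"] that by simp
    hence "ln ((exp y + exp (-y))/2) \<le> y^2/2"
    proof -
      have "(1 + (1/2) * (exp (2*y) - 1)) = exp y * ((exp y + exp (-y))/2)"
        by (simp add: field_simps exp_add[symmetric] exp_minus mult_exp_exp)
      moreover have "(exp y + exp (-y))/2 > 0" by (simp add: add_pos_pos)
      ultimately have "ln (1 + (1/2) * (exp (2*y) - 1)) = y + ln ((exp y + exp (-y))/2)"
        using ln_mult[of "exp y" "(exp y + exp (-y))/2"] by (simp only: ln_exp) simp
      thus ?thesis using \<open>-(2*y) * (1/2) + ln (1 + (1/2) * (exp (2*y) - 1)) \<le> (2*y)^2/8\<close>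
        by (simp add: power2_eq_square)
    qed
    hence "(exp y + exp (-y))/2 \<le> exp (y^2/2)"
      by (metis add_pos_pos divide_pos_pos exp_gt_zero exp_le_cancel_iff exp_ln zero_less_numeral)
    thus ?thesis by simp
  qed
  show ?thesis
  proof (cases "x \<ge> 0")
    case True thus ?thesis using main by blast
  next
    case False thus ?thesis using main[of "-x"] by (simp add: add.commute)
  qed
qed

definition sg :: "'a set \<Rightarrow> 'a \<Rightarrow> real" where "sg D v = (if v \<in> D then -1 else 1)"

lemma sg_sq [simp]: "(sg D v)^2 = 1" by (simp add: sg_def)

lemma mgf_signs:
  fixes F :: "'a set" and c :: "'a \<Rightarrow> real"
  assumes "finite F" "l \<ge> 0"
  shows "(\<Sum>D\<in>Pow F. exp (l * (\<Sum>v\<in>F. sg D v * c v))) \<le> 2 ^ card F * exp (l^2 * (\<Sum>v\<in>F. (c v)^2) / 2)"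
proof -
  have "(\<Sum>D\<in>Pow F. exp (l * (\<Sum>v\<in>F. sg D v * c v)))
      = (\<Sum>D\<in>Pow F. (\<Prod>v\<in>D. exp (- l * c v)) * (\<Prod>v\<in>F-D. exp (l * c v)))"
  proof (intro sum.cong refl)
    fix D assume "D \<in> Pow F"
    hence DF: "D \<subseteq> F" by simp
    have "exp (l * (\<Sum>v\<in>F. sg D v * c v)) = (\<Prod>v\<in>F. exp (l * (sg D v * c v)))"
      using assms(1) by (simp add: sum_distrib_left exp_sum)
    also have "\<dots> = (\<Prod>v\<in>F-D. exp (l * (sg D v * c v))) * (\<Prod>v\<in>D. exp (l * (sg D v * c v)))"
      using prod.subset_diff[OF DF assms(1)] by simp
    also have "(\<Prod>v\<in>F-D. exp (l * (sg D v * c v))) = (\<Prod>v\<in>F-D. exp (l * c v))"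
      by (intro prod.cong refl) (simp add: sg_def)
    also have "(\<Prod>v\<in>D. exp (l * (sg D v * c v))) = (\<Prod>v\<in>D. exp (- l * c v))"
      by (intro prod.cong refl) (simp add: sg_def)
    finally show "exp (l * (\<Sum>v\<in>F. sg D v * c v)) = (\<Prod>v\<in>D. exp (- l * c v)) * (\<Prod>v\<in>F-D. exp (l * c v))"
      by (simp add: mult.commute)
  qed
  also have "\<dots> = (\<Prod>v\<in>F. exp (- l * c v) + exp (l * c v))"
    using prod_add[OF assms(1), of "\<lambda>v. exp (- l * c v)" "\<lambda>v. exp (l * c v)"] by simp
  also have "\<dots> \<le> (\<Prod>v\<in>F. 2 * exp ((l * c v)^2 / 2))"
    by (intro prod_mono conjI add_nonneg_nonneg) (use cosh_bound in \<open>auto simp: add.commute\<close>)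
  also have "\<dots> = 2 ^ card F * exp (l^2 * (\<Sum>v\<in>F. (c v)^2) / 2)"
    using assms(1) by (simp add: prod.distrib exp_sum sum_distrib_left sum_divide_distrib power_mult_distrib)
  finally show ?thesis .
qed

lemma one_sided:
  fixes F :: "'a set" and c :: "'a \<Rightarrow> real"
  assumes "finite F" "a \<ge> 0" "(\<Sum>v\<in>F. (c v)^2) > 0"
  shows "real (card {D\<in>Pow F. (\<Sum>v\<in>F. sg D v * c v) \<ge> a}) \<le> exp (-(a^2) / (2 * (\<Sum>v\<in>F. (c v)^2))) * 2 ^ card F"
proof -
  define S where "S = (\<Sum>v\<in>F. (c v)^2)"
  define l where "l = a / S"
  have S0: "S > 0" using assms S_def by simp
  have l0: "l \<ge> 0" using assms(2) S0 by (simp add: l_def)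
  define Z where "Z = {D\<in>Pow F. (\<Sum>v\<in>F. sg D v * c v) \<ge> a}"
  have finP: "finite (Pow F)" using assms(1) by simp
  have "real (card Z) * exp (l * a) = (\<Sum>D\<in>Z. exp (l * a))" by simp
  also have "\<dots> \<le> (\<Sum>D\<in>Z. exp (l * (\<Sum>v\<in>F. sg D v * c v)))"
    using l0 by (intro sum_mono) (auto simp: Z_def mult_left_mono)
  also have "\<dots> \<le> (\<Sum>D\<in>Pow F. exp (l * (\<Sum>v\<in>F. sg D v * c v)))"
    using finP by (intro sum_mono2) (auto simp: Z_def)
  also have "\<dots> \<le> 2 ^ card F * exp (l^2 * S / 2)"
    using mgf_signs[OF assms(1) l0, of c] by (simp add: S_def)
  finally have "real (card Z) \<le> 2 ^ card F * exp (l^2 * S / 2) / exp (l * a)"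
    by (simp add: pos_le_divide_eq)
  also have "\<dots> = 2 ^ card F * exp (l^2 * S / 2 - l * a)"
    by (simp add: exp_diff)
  also have "l^2 * S / 2 - l * a = -(a^2) / (2 * S)"
    using S0 by (simp add: l_def field_simps power2_eq_square)
  finally show ?thesis by (simp add: Z_def S_def mult.commute)
qed

lemma chernoff_signs:
  fixes F :: "'a set" and c :: "'a \<Rightarrow> real"
  assumes "finite F" "s \<ge> 0"
  shows "real (card {D\<in>Pow F. (\<Sum>v\<in>F. sg D v * c v)^2 > s * (\<Sum>v\<in>F. (c v)^2)}) \<le> 2 * exp (-s/2) * 2 ^ card F"
proof (cases "(\<Sum>v\<in>F. (c v)^2) = 0")
  case True
  hence "\<forall>v\<in>F. c v = 0" using assms(1) by (simp add: sum_nonneg_eq_0_iff)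
  hence "{D\<in>Pow F. (\<Sum>v\<in>F. sg D v * c v)^2 > s * (\<Sum>v\<in>F. (c v)^2)} = {}" using True by simp
  hence "real (card {D\<in>Pow F. (\<Sum>v\<in>F. sg D v * c v)^2 > s * (\<Sum>v\<in>F. (c v)^2)}) = 0"
    by (simp only: card.empty of_nat_0)
  thus ?thesis by simp
next
  case False
  define S where "S = (\<Sum>v\<in>F. (c v)^2)"
  have S0: "S > 0" using False S_def by (simp add: order_le_neq_trans sum_nonneg)
  define a where "a = sqrt (s * S)"
  have a0: "a \<ge> 0" using assms S0 by (simp add: a_def)
  have a2: "a^2 = s * S" using assms S0 by (simp add: a_def)
  have negc: "(\<Sum>v\<in>F. (- c v)^2) = S" by (simp add: S_def)
  have sub: "{D\<in>Pow F. (\<Sum>v\<in>F. sg D v * c v)^2 > s * S} \<subseteq>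
      {D\<in>Pow F. (\<Sum>v\<in>F. sg D v * c v) \<ge> a} \<union> {D\<in>Pow F. (\<Sum>v\<in>F. sg D v * (- c v)) \<ge> a}"
  proof
    fix D assume "D \<in> {D\<in>Pow F. (\<Sum>v\<in>F. sg D v * c v)^2 > s * S}"
    hence D: "D \<in> Pow F" "(\<Sum>v\<in>F. sg D v * c v)^2 > a^2" using a2 by auto
    hence "\<bar>\<Sum>v\<in>F. sg D v * c v\<bar> > a" using a0 by (metis abs_le_square_iff abs_of_nonneg not_le)
    moreover have "(\<Sum>v\<in>F. sg D v * (- c v)) = - (\<Sum>v\<in>F. sg D v * c v)" by (simp add: sum_negf)
    ultimately show "D \<in> {D\<in>Pow F. (\<Sum>v\<in>F. sg D v * c v) \<ge> a} \<union> {D\<in>Pow F. (\<Sum>v\<in>F. sg D v * (- c v)) \<ge> a}"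
      using D(1) by auto
  qed
  have e: "exp (-(a^2) / (2 * S)) = exp (-s/2)" using S0 a2 by simp
  have "real (card {D\<in>Pow F. (\<Sum>v\<in>F. sg D v * c v)^2 > s * S})
      \<le> real (card {D\<in>Pow F. (\<Sum>v\<in>F. sg D v * c v) \<ge> a}) + real (card {D\<in>Pow F. (\<Sum>v\<in>F. sg D v * (- c v)) \<ge> a})"
  proof -
    have "card {D\<in>Pow F. (\<Sum>v\<in>F. sg D v * c v)^2 > s * S} \<le> card ({D\<in>Pow F. (\<Sum>v\<in>F. sg D v * c v) \<ge> a} \<union> {D\<in>Pow F. (\<Sum>v\<in>F. sg D v * (- c v)) \<ge> a})"
      using sub assms(1) by (intro card_mono) auto
    also have "\<dots> \<le> card {D\<in>Pow F. (\<Sum>v\<in>F. sg D v * c v) \<ge> a} + card {D\<in>Pow F. (\<Sum>v\<in>F. sg D v * (- c v)) \<ge> a}"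
      by (rule card_Un_le)
    finally show ?thesis by linarith
  qed
  also have "\<dots> \<le> exp (-s/2) * 2 ^ card F + exp (-s/2) * 2 ^ card F"
  proof -
    have o1: "real (card {D\<in>Pow F. (\<Sum>v\<in>F. sg D v * c v) \<ge> a}) \<le> exp (-s/2) * 2 ^ card F"
      using one_sided[OF assms(1) a0, of c] S0 unfolding S_def[symmetric] e by simp
    have o2: "real (card {D\<in>Pow F. (\<Sum>v\<in>F. sg D v * (- c v)) \<ge> a}) \<le> exp (-s/2) * 2 ^ card F"
      using one_sided[OF assms(1) a0, of "\<lambda>v. - c v"] S0 unfolding negc e by simp
    show ?thesis using o1 o2 by linarith
  qed
  finally show ?thesis by (simp add: S_def mult_ac)
qed


lemma rounding:
  fixes F :: "(real^'n) set" and H :: "'i \<Rightarrow> real^'n^'n" and I :: "'i set"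
  assumes F: "finite F" "pairwise orthogonal F" "\<forall>u\<in>F. norm u = 1"
    and t: "\<forall>v\<in>F. t v \<ge> 0" and I: "finite I" and H: "\<forall>i\<in>I. psd (H i)" and s: "s \<ge> 0"
    and small: "(\<Sum>i\<in>I. real (min (rank (H i)) (card F))) * (2 * exp (-s/2)) < 1"
  shows "\<exists>w. (norm w)^2 = (\<Sum>v\<in>F. t v) \<and> (\<forall>i\<in>I. w \<bullet> (H i *v w) \<le> s * (\<Sum>v\<in>F. t v * (v \<bullet> (H i *v v))))"
proof -
  have "\<forall>i\<in>I. \<exists>p :: (real^'n) set \<times> (real^'n \<Rightarrow> real^'n). finite (fst p) \<and> card (fst p) \<le> min (rank (H i)) (card F) \<and>
          (\<forall>x\<in>span F. x \<bullet> (H i *v x) = (\<Sum>e\<in>fst p. (snd p e \<bullet> x)^2))"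
  proof
    fix i assume "i \<in> I"
    then obtain E :: "(real^'n) set" and \<gamma> where "finite E" "card E \<le> rank (H i)" "card E \<le> card F"
      "\<And>x. x \<in> span F \<Longrightarrow> x \<bullet> (H i *v x) = (\<Sum>e\<in>E. (\<gamma> e \<bullet> x)^2)"
      using psd_decomp_on_span[OF _ F] H by metis
    thus "\<exists>p :: (real^'n) set \<times> (real^'n \<Rightarrow> real^'n). finite (fst p) \<and> card (fst p) \<le> min (rank (H i)) (card F) \<and>
          (\<forall>x\<in>span F. x \<bullet> (H i *v x) = (\<Sum>e\<in>fst p. (snd p e \<bullet> x)^2))"
      by (intro exI[of _ "(E, \<gamma>)"]) auto
  qed
  hence "\<exists>p :: 'i \<Rightarrow> (real^'n) set \<times> (real^'n \<Rightarrow> real^'n). \<forall>i\<in>I. finite (fst (p i)) \<and> card (fst (p i)) \<le> min (rank (H i)) (card F) \<and>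
          (\<forall>x\<in>span F. x \<bullet> (H i *v x) = (\<Sum>e\<in>fst (p i). (snd (p i) e \<bullet> x)^2))"
    by (rule bchoice)
  then obtain p :: "'i \<Rightarrow> (real^'n) set \<times> (real^'n \<Rightarrow> real^'n)" where pall: "\<forall>i\<in>I. finite (fst (p i)) \<and> card (fst (p i)) \<le> min (rank (H i)) (card F) \<and>
          (\<forall>x\<in>span F. x \<bullet> (H i *v x) = (\<Sum>e\<in>fst (p i). (snd (p i) e \<bullet> x)^2))"
    by (rule exE)
  have p: "\<And>i. i \<in> I \<Longrightarrow> finite (fst (p i))"
     "\<And>i. i \<in> I \<Longrightarrow> card (fst (p i)) \<le> min (rank (H i)) (card F)"
     "\<And>i x. i \<in> I \<Longrightarrow> x \<in> span F \<Longrightarrow> x \<bullet> (H i *v x) = (\<Sum>e\<in>fst (p i). (snd (p i) e \<bullet> x)^2)"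
    using pall by auto
  define EE where "EE i = fst (p i)" for i
  define \<gamma> where "\<gamma> i = snd (p i)" for i
  define w where "w D = (\<Sum>v\<in>F. (sg D v * sqrt (t v)) *\<^sub>R v)" for D
  define cc where "cc i e v = sqrt (t v) * (\<gamma> i e \<bullet> v)" for i e v
  define Bad where "Bad i e = {D\<in>Pow F. (\<Sum>v\<in>F. sg D v * cc i e v)^2 > s * (\<Sum>v\<in>F. (cc i e v)^2)}" for i e
  have wspan: "w D \<in> span F" for D
    unfolding w_def by (rule span_sum, rule span_mul, erule span_base)
  have gw: "\<gamma> i e \<bullet> w D = (\<Sum>v\<in>F. sg D v * cc i e v)" for i e D
    unfolding w_def cc_def by (simp add: inner_sum_right mult_ac)
  have normw: "(norm (w D))^2 = (\<Sum>v\<in>F. t v)" for D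
  proof -
    have "(norm (w D))^2 = (\<Sum>v\<in>F. (norm ((sg D v * sqrt (t v)) *\<^sub>R v))^2)"
      unfolding w_def using F(1,2)
      by (intro norm_sum_Pythagorean) (auto simp: pairwise_def orthogonal_clauses)
    also have "\<dots> = (\<Sum>v\<in>F. t v)"
      using F(3) t by (intro sum.cong refl) (simp add: power_mult_distrib)
    finally show ?thesis .
  qed
  have cardBad: "real (card (Bad i e)) \<le> 2 * exp (-s/2) * 2 ^ card F" for i e
    unfolding Bad_def by (rule chernoff_signs[OF F(1) s])
  have finB: "finite (Bad i e)" for i e using F(1) by (simp add: Bad_def)
  have "real (card (\<Union>i\<in>I. \<Union>e\<in>EE i. Bad i e)) \<le> (\<Sum>i\<in>I. \<Sum>e\<in>EE i. real (card (Bad i e)))"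
  proof -
    have "card (\<Union>i\<in>I. \<Union>e\<in>EE i. Bad i e) \<le> (\<Sum>i\<in>I. card (\<Union>e\<in>EE i. Bad i e))"
      by (rule card_UN_le[OF I])
    also have "\<dots> \<le> (\<Sum>i\<in>I. \<Sum>e\<in>EE i. card (Bad i e))"
      using p(1) by (intro sum_mono card_UN_le) (simp add: EE_def)
    finally have "real (card (\<Union>i\<in>I. \<Union>e\<in>EE i. Bad i e)) \<le> real (\<Sum>i\<in>I. \<Sum>e\<in>EE i. card (Bad i e))"
      by (simp only: of_nat_le_iff)
    thus ?thesis by simp
  qed
  also have "\<dots> \<le> (\<Sum>i\<in>I. real (card (EE i)) * (2 * exp (-s/2) * 2 ^ card F))"
    by (intro sum_mono) (use cardBad in \<open>simp add: sum_bounded_above\<close>)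
  also have "\<dots> \<le> (\<Sum>i\<in>I. real (min (rank (H i)) (card F)) * (2 * exp (-s/2) * 2 ^ card F))"
    using p(2) by (intro sum_mono mult_right_mono) (auto simp: EE_def)
  also have "\<dots> = ((\<Sum>i\<in>I. real (min (rank (H i)) (card F))) * (2 * exp (-s/2))) * 2 ^ card F"
    by (simp add: sum_distrib_right mult.assoc)
  also have "\<dots> < 2 ^ card F" using small by simp
  finally have "card (\<Union>i\<in>I. \<Union>e\<in>EE i. Bad i e) < card (Pow F)"
    using F(1) by (simp add: card_Pow)
  moreover have "(\<Union>i\<in>I. \<Union>e\<in>EE i. Bad i e) \<subseteq> Pow F" by (auto simp: Bad_def)
  ultimately have "\<not> Pow F \<subseteq> (\<Union>i\<in>I. \<Union>e\<in>EE i. Bad i e)"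
    using F(1) card_mono[of "\<Union>i\<in>I. \<Union>e\<in>EE i. Bad i e" "Pow F"] finite_subset
    by (meson finite_Pow_iff leD)
  then obtain D where D: "D \<in> Pow F" "D \<notin> (\<Union>i\<in>I. \<Union>e\<in>EE i. Bad i e)"
    by blast
  show ?thesis
  proof (intro exI[of _ "w D"] conjI ballI)
    show "(norm (w D))^2 = (\<Sum>v\<in>F. t v)" by (rule normw)
    fix i assume i: "i \<in> I"
    have "w D \<bullet> (H i *v w D) = (\<Sum>e\<in>EE i. (\<gamma> i e \<bullet> w D)^2)"
      using p(3)[OF i wspan] by (simp add: EE_def \<gamma>_def)
    also have "\<dots> \<le> (\<Sum>e\<in>EE i. s * (\<Sum>v\<in>F. (cc i e v)^2))"
    proof (intro sum_mono)
      fix e assume "e \<in> EE i"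
      hence "D \<notin> Bad i e" using D(2) i by blast
      thus "(\<gamma> i e \<bullet> w D)^2 \<le> s * (\<Sum>v\<in>F. (cc i e v)^2)"
        using D(1) unfolding gw Bad_def by auto
    qed
    also have "\<dots> = s * (\<Sum>v\<in>F. t v * (\<Sum>e\<in>EE i. (\<gamma> i e \<bullet> v)^2))"
      unfolding cc_def using t
      by (simp add: sum_distrib_left power_mult_distrib mult_ac) (rule sum.swap)
    also have "\<dots> = s * (\<Sum>v\<in>F. t v * (v \<bullet> (H i *v v)))"
      using p(3)[OF i] by (simp add: EE_def \<gamma>_def span_base)
    finally show "w D \<bullet> (H i *v w D) \<le> s * (\<Sum>v\<in>F. t v * (v \<bullet> (H i *v v)))" .
  qed
qed


definition outer :: "real^'n \<Rightarrow> real^'n^'n" where "outer u = (\<chi> i j. u$i * u$j)"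

lemma outer_inner: "(H::real^'n^'n) \<bullet> outer u = u \<bullet> (H *v u)"
  by (simp add: outer_def inner_vec_def matrix_vector_mult_def sum_distrib_left mult_ac)

lemma reduction:
  fixes X :: "real^'n^'n" and H :: "'i \<Rightarrow> real^'n^'n" and I :: "'i set"
  assumes X: "psd X" and I: "finite I"
  shows "\<exists>F t. finite F \<and> pairwise orthogonal F \<and> (\<forall>u\<in>F. norm u = 1) \<and> card F \<le> card I + 1 \<and>
     (\<forall>v\<in>F. t v \<ge> 0) \<and> (\<Sum>v\<in>F. t v) = trace X \<and>
     (\<forall>i\<in>I. (\<Sum>v\<in>F. t v * (v \<bullet> (H i *v v))) = trace (H i ** X))"
proof -
  obtain B where B: "finite B" "pairwise orthogonal B" "\<forall>u\<in>B. norm u = 1"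
    "\<forall>u\<in>B. X *v u = (u \<bullet> (X *v u)) *\<^sub>R u" "\<And>x. x = (\<Sum>u\<in>B. (u \<bullet> x) *\<^sub>R u)"
    "\<And>x. X *v x = (\<Sum>u\<in>B. ((u \<bullet> (X *v u)) * (u \<bullet> x)) *\<^sub>R u)"
    using spectral[OF psd_symm[OF X]] by blast
  define lam where "lam u = u \<bullet> (X *v u)" for u
  have lam0: "lam u \<ge> 0" for u using X by (simp add: psd_def lam_def)
  have Xv: "X *v x = (\<Sum>u\<in>B. (lam u * (u \<bullet> x)) *\<^sub>R u)" for x unfolding lam_def by (rule B(6))
  have trHX: "trace (G ** X) = (\<Sum>u\<in>B. lam u * (u \<bullet> (G *v u)))" for G
    by (rule trace_spectral[OF B(1) Xv])
  have trX: "trace X = (\<Sum>u\<in>B. lam u)"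
    using trHX[of "mat 1"] B(3) by (simp add: matrix_mul_lid norm_eq_1)
  define Bp where "Bp = {u\<in>B. lam u > 0}"
  have finBp: "finite Bp" using B(1) by (simp add: Bp_def)
  have sumBp: "(\<Sum>u\<in>B. lam u * f u) = (\<Sum>u\<in>Bp. lam u * f u)" for f
    using B(1) lam0 by (intro sum.mono_neutral_right) (auto simp: Bp_def order_less_le)
  show ?thesis
  proof (cases "Bp = {}")
    case True
    hence "lam u = 0" if "u \<in> B" for u using that lam0 by (auto simp: Bp_def order_less_le)
    hence "trace X = 0" "\<forall>i\<in>I. trace (H i ** X) = 0" using trX trHX by auto
    thus ?thesis by (intro exI[of _ "{}"]) auto
  next
    case False
    define T where "T = (\<Sum>u\<in>Bp. lam u)"
    have T0: "T > 0" unfolding T_def using finBp False by (intro sum_pos) (auto simp: Bp_def)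
    have trX': "trace X = T" using trX sumBp[of "\<lambda>_. 1"] by (simp add: T_def)
    define V where "V = span (H ` I)"
    have "\<forall>u. \<exists>y. y \<in> V \<and> (\<forall>w\<in>V. orthogonal (outer u - y) w)"
    proof
      fix u
      obtain y z where "y \<in> span (H ` I)" "\<And>w. w \<in> span (H ` I) \<Longrightarrow> orthogonal z w" "outer u = y + z"
        using orthogonal_subspace_decomp_exists by blast
      thus "\<exists>y. y \<in> V \<and> (\<forall>w\<in>V. orthogonal (outer u - y) w)"
        by (intro exI[of _ y]) (auto simp: V_def)
    qed
    then obtain b where b: "\<And>u. b u \<in> V" "\<And>u w. w \<in> V \<Longrightarrow> orthogonal (outer u - b u) w"
      by metis
    have Hb: "H i \<bullet> b u = u \<bullet> (H i *v u)" if "i \<in> I" for i u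
    proof -
      have "H i \<in> V" using that by (simp add: V_def span_base)
      hence "(outer u - b u) \<bullet> H i = 0" using b(2) by (simp add: orthogonal_def)
      hence "H i \<bullet> outer u - H i \<bullet> b u = 0" by (simp add: inner_diff_left inner_diff_right inner_commute)
      thus ?thesis by (simp add: outer_inner)
    qed
    define p where "p = (\<Sum>u\<in>Bp. (lam u / T) *\<^sub>R b u)"
    have "p \<in> convex hull (b ` Bp)"
      unfolding p_def
    proof (rule convex_sum[OF finBp convex_convex_hull])
      show "sum (\<lambda>u. lam u / T) Bp = 1" using T0 by (simp add: T_def sum_divide_distrib[symmetric])
      show "\<And>i. i \<in> Bp \<Longrightarrow> 0 \<le> lam i / T" using T0 lam0 by simp
      show "\<And>i. i \<in> Bp \<Longrightarrow> b i \<in> convex hull (b ` Bp)" by (simp add: hull_inc)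
    qed
    then obtain S mu where S: "finite S" "S \<subseteq> b ` Bp" "card S \<le> aff_dim (b ` Bp) + 1"
      "\<forall>x\<in>S. 0 \<le> mu x" "sum mu S = 1" "(\<Sum>v\<in>S. mu v *\<^sub>R v) = p"
      unfolding convex_hull_caratheodory_aff_dim by blast
    have "aff_dim (b ` Bp) \<le> aff_dim V"
      using b(1) by (intro aff_dim_subset) auto
    also have "aff_dim V = int (dim V)" unfolding V_def by (simp add: aff_dim_subspace)
    also have "dim V \<le> card I"
    proof -
      have "dim V \<le> card (H ` I)" unfolding V_def using I by (intro dim_le_card) auto
      also have "\<dots> \<le> card I" using I by (rule card_image_le)
      finally show ?thesis .
    qed
    finally have cardS: "card S \<le> card I + 1" using S(3) by linarith
    define g where "g s = (SOME u. u \<in> Bp \<and> b u = s)" for s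
    have g: "g s \<in> Bp" "b (g s) = s" if "s \<in> S" for s
    proof -
      have "\<exists>u. u \<in> Bp \<and> b u = s" using S(2) that by blast
      hence "g s \<in> Bp \<and> b (g s) = s" unfolding g_def by (rule someI_ex)
      thus "g s \<in> Bp" "b (g s) = s" by auto
    qed
    have injg: "inj_on g S" by (metis g(2) inj_onI)
    define F where "F = g ` S"
    define t where "t v = T * mu (b v)" for v
    have FB: "F \<subseteq> B" using g(1) by (auto simp: F_def Bp_def)
    have sumF: "(\<Sum>v\<in>F. t v * f v) = (\<Sum>s\<in>S. T * mu s * f (g s))" for f
      unfolding F_def by (simp add: sum.reindex[OF injg] t_def g(2))
    show ?thesis
    proof (intro exI[of _ F] exI[of _ t] conjI ballI)
      show "finite F" using S(1) by (simp add: F_def)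
      show "pairwise orthogonal F" using B(2) FB pairwise_subset by blast
      show "\<And>u. u \<in> F \<Longrightarrow> norm u = 1" using B(3) FB by auto
      show "card F \<le> card I + 1" using cardS card_image[OF injg] by (simp add: F_def)
      show "\<And>v. v \<in> F \<Longrightarrow> 0 \<le> t v" using S(4) T0 g(2) by (auto simp: F_def t_def)
      show "(\<Sum>v\<in>F. t v) = trace X"
        using sumF[of "\<lambda>_. 1"] S(5) by (simp add: trX' sum_distrib_left[symmetric])
      fix i assume i: "i \<in> I"
      have "(\<Sum>v\<in>F. t v * (v \<bullet> (H i *v v))) = (\<Sum>s\<in>S. T * mu s * (H i \<bullet> s))"
      proof -
        have "(\<Sum>s\<in>S. T * mu s * (g s \<bullet> (H i *v g s))) = (\<Sum>s\<in>S. T * mu s * (H i \<bullet> s))"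
        proof (intro sum.cong refl)
          fix s assume "s \<in> S"
          hence "H i \<bullet> s = g s \<bullet> (H i *v g s)" using Hb[OF i, of "g s"] g(2) by simp
          thus "T * mu s * (g s \<bullet> (H i *v g s)) = T * mu s * (H i \<bullet> s)" by simp
        qed
        thus ?thesis using sumF[of "\<lambda>v. v \<bullet> (H i *v v)"] by simp
      qed
      also have "\<dots> = T * (H i \<bullet> p)"
        by (simp add: S(6)[symmetric] inner_sum_right sum_distrib_left mult_ac)
      also have "\<dots> = (\<Sum>u\<in>Bp. lam u * (u \<bullet> (H i *v u)))"
        using T0 Hb[OF i] by (simp add: p_def inner_sum_right sum_distrib_left)
      also have "\<dots> = trace (H i ** X)" using trHX sumBp by simp
      finally show "(\<Sum>v\<in>F. t v * (v \<bullet> (H i *v v))) = trace (H i ** X)" .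
    qed
  qed
qed


lemma select_Q:
  fixes \<beta> :: "nat \<Rightarrow> real"
  assumes Q: "1 \<le> Q" "Q \<le> M - 1" and b: "\<forall>i\<in>{1..M}. 0 \<le> \<beta> i \<and> \<beta> i \<le> 1"
    and sb: "(\<Sum>i=1..M. \<beta> i) = real Q"
  obtains S where "S \<subseteq> {1..M}" "card S = Q" "\<forall>i\<in>S. \<beta> i \<ge> 1 / (real M - real Q + 1)"
proof -
  define d where "d = real M - real Q + 1"
  have d2: "d \<ge> 2" using Q by (simp add: d_def)
  define S' where "S' = {i\<in>{1..M}. \<beta> i \<ge> 1 / d}"
  have "Q \<le> card S'"
  proof (rule ccontr)
    assume "\<not> Q \<le> card S'"
    hence kQ: "card S' \<le> Q - 1" by simp
    define k where "k = card S'"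
    define R where "R = {1..M} - S'"
    have SM: "S' \<subseteq> {1..M}" by (auto simp: S'_def)
    have cardR: "card R = M - k" unfolding R_def k_def using SM by (simp add: card_Diff_subset finite_subset)
    have kM: "k < M" using kQ Q unfolding k_def by linarith
    have Rne: "R \<noteq> {}"
    proof
      assume "R = {}" hence "card R = 0" by simp
      thus False using cardR kM by simp
    qed
    have "(\<Sum>i=1..M. \<beta> i) = (\<Sum>i\<in>S'. \<beta> i) + (\<Sum>i\<in>R. \<beta> i)"
      unfolding R_def using SM by (metis add.commute finite_atLeastAtMost sum.subset_diff)
    also have "(\<Sum>i\<in>S'. \<beta> i) \<le> real k"
      using b SM sum_bounded_above[of S' \<beta> 1] by (auto simp: k_def)
    also have "(\<Sum>i\<in>R. \<beta> i) < (\<Sum>i\<in>R. 1 / d)"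
      using Rne by (intro sum_strict_mono) (auto simp: R_def S'_def)
    also have "(\<Sum>i\<in>R. 1 / d) = real (M - k) / d" using cardR by simp
    finally have "real Q < real k + real (M - k) / d" using sb by simp
    hence "real Q * d < real k * d + real (M - k)" using d2 by (simp add: field_simps)
    moreover have "real k * (d - 1) \<le> (real Q - 1) * (d - 1)"
      using kQ Q d2 by (intro mult_right_mono) (auto simp: k_def)
    moreover have "real (M - k) = real M - real k" using kM by simp
    ultimately show False using Q unfolding d_def by (simp add: algebra_simps of_nat_diff)
  qed
  then obtain S where S: "S \<subseteq> S'" "card S = Q" by (metis obtain_subset_with_card_n)
  show ?thesis
  proof (rule that)
    show "S \<subseteq> {1..M}" using S(1) by (auto simp: S'_def)
    show "card S = Q" by (rule S(2))
    show "\<forall>i\<in>S. \<beta> i \<ge> 1 / (real M - real Q + 1)" using S(1) by (auto simp: S'_def d_def)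
  qed
qed

lemma sum_sq_le_sq_sum:
  fixes a :: "'a \<Rightarrow> real"
  assumes "finite A" "\<forall>i\<in>A. a i \<ge> 0"
  shows "(\<Sum>i\<in>A. (a i)^2) \<le> (\<Sum>i\<in>A. a i)^2"
proof -
  have "(\<Sum>i\<in>A. (a i)^2) \<le> (\<Sum>i\<in>A. a i * (\<Sum>j\<in>A. a j))"
    using assms by (intro sum_mono) (auto simp: power2_eq_square intro!: mult_left_mono member_le_sum)
  also have "\<dots> = (\<Sum>i\<in>A. a i)^2" by (simp add: power2_eq_square sum_distrib_right)
  finally show ?thesis .
qed

lemma small_bound:
  fixes K :: real
  assumes "1 < 50 * K" "A \<le> K^2"
  shows "A * (2 * exp (- (200 * ln (50 * K)) / 2)) < 1"
proof -
  define z where "z = 50 * K"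
  have z1: "z > 1" using assms z_def by simp
  have "exp (- (200 * ln z) / 2) = inverse (z ^ 100)"
  proof -
    have "exp (100 * ln z) = z ^ 100"
      using z1 by (metis exp_ln_iff less_trans zero_less_one exp_of_nat_mult of_nat_numeral)
    thus ?thesis by (simp add: exp_minus)
  qed
  moreover have "z^2 \<le> z^100" using z1 by (intro power_increasing) auto
  moreover have "K^2 = z^2 / 2500" by (simp add: z_def power2_eq_square)
  ultimately have Az: "A \<le> z^100 / 2500" and ex: "exp (- (200 * ln z) / 2) = inverse (z ^ 100)"
    using assms(2) by auto
  have zp: "z^100 > 0" using z1 by simp
  have "A * (2 * inverse (z^100)) \<le> (z^100 / 2500) * (2 * inverse (z^100))"
    using Az zp by (intro mult_right_mono) auto
  also have "\<dots> = 2 / 2500" using zp by (simp add: field_simps)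
  finally show ?thesis unfolding z_def[symmetric] ex by simp
qed


lemma point_bound:
  fixes H :: "nat \<Rightarrow> real^'n^'n" and X :: "real^'n^'n" and \<beta> :: "nat \<Rightarrow> real"
  assumes M: "M \<ge> 2" and Q: "1 \<le> Q" "Q \<le> M - 1" and e: "0 < \<epsilon>" "\<epsilon> < 1"
    and H: "\<forall>i\<in>{1..M}. psd (H i)"
    and X: "psd X" and b: "\<forall>i\<in>{1..M}. 0 \<le> \<beta> i \<and> \<beta> i \<le> 1"
    and tr: "\<forall>i\<in>{1..M}. trace (H i ** X) \<le> \<beta> i * \<epsilon> + (1 - \<beta> i)"
    and sb: "(\<Sum>i=1..M. \<beta> i) = real Q"
    and Kdef: "K = (\<Sum>i=1..M. min (real (rank (H i))) (sqrt (2 * real M)))"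
    and cdef: "c = 1 - (1 - \<epsilon>) / (real M - real Q + 1)"
    and lnpos: "1 < 50 * K"
  shows "ereal (\<epsilon> / c * (1 / (200 * ln (50 * K))) * trace X) \<le> vQP H M Q \<epsilon>"
proof -
  obtain S where S: "S \<subseteq> {1..M}" "card S = Q" "\<forall>i\<in>S. \<beta> i \<ge> 1 / (real M - real Q + 1)"
    using select_Q[OF Q b sb] by blast
  define th where "th = 1 / (real M - real Q + 1)"
  have th: "0 < th" "th \<le> 1" using Q by (auto simp: th_def)
  have c_th: "c = 1 - (1 - \<epsilon>) * th" by (simp add: cdef th_def)
  have ce: "\<epsilon> \<le> c" using c_th th e by (smt (verit) mult_left_le)
  have c0: "c > 0" using ce e by simp
  obtain F t where F: "finite F" "pairwise orthogonal F" "\<forall>u\<in>F. norm u = 1" "card F \<le> card {1..M} + 1"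
    "\<forall>v\<in>F. t v \<ge> 0" "(\<Sum>v\<in>F. t v) = trace X"
    "\<forall>i\<in>{1..M}. (\<Sum>v\<in>F. t v * (v \<bullet> (H i *v v))) = trace (H i ** X)"
    using reduction[OF X, of "{1..M}" H] by auto
  have cardF: "card F \<le> M + 1" using F(4) by simp
  define s where "s = 200 * ln (50 * K)"
  have s0: "s > 0" using lnpos by (simp add: s_def)
  have K0: "\<forall>i\<in>{1..M}. min (real (rank (H i))) (sqrt (2 * real M)) \<ge> 0" by simp
  have per: "real (min (rank (H i)) (card F)) \<le> (min (real (rank (H i))) (sqrt (2 * real M)))^2" for i
  proof (cases "real (rank (H i)) \<le> sqrt (2 * real M)")
    case True
    have "real (min (rank (H i)) (card F)) \<le> real (rank (H i))" by simp
    also have "\<dots> \<le> real (rank (H i)) ^ 2"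
      using le_square[of "rank (H i)"] by (simp add: power2_eq_square flip: of_nat_mult)
    finally show ?thesis using True by simp
  next
    case False
    have "real (min (rank (H i)) (card F)) \<le> real (M + 1)" using cardF by simp
    also have "\<dots> \<le> 2 * real M" using M by simp
    also have "\<dots> = (sqrt (2 * real M))^2" by simp
    finally show ?thesis using False by simp
  qed
  have sumK: "(\<Sum>i\<in>{1..M}. real (min (rank (H i)) (card F))) \<le> K^2"
  proof -
    have "(\<Sum>i\<in>{1..M}. real (min (rank (H i)) (card F))) \<le> (\<Sum>i\<in>{1..M}. (min (real (rank (H i))) (sqrt (2 * real M)))^2)"
      by (intro sum_mono per)
    also have "\<dots> \<le> K^2" unfolding Kdef by (rule sum_sq_le_sq_sum) (use K0 in auto)
    finally show ?thesis .
  qed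
  have small: "(\<Sum>i\<in>{1..M}. real (min (rank (H i)) (card F))) * (2 * exp (-s/2)) < 1"
    using small_bound[OF lnpos sumK] by (simp add: s_def)
  define t' where "t' v = \<epsilon> / c * t v" for v
  have t'0: "\<forall>v\<in>F. t' v \<ge> 0" using F(5) e c0 by (simp add: t'_def)
  obtain w where w: "(norm w)^2 = (\<Sum>v\<in>F. t' v)"
    "\<forall>i\<in>{1..M}. w \<bullet> (H i *v w) \<le> s * (\<Sum>v\<in>F. t' v * (v \<bullet> (H i *v v)))"
    using rounding[OF F(1-3) t'0 _ H _ small] s0 by auto
  define w0 where "w0 = (1 / sqrt s) *\<^sub>R w"
  define b' where "b' i = (if i \<in> S then 1 else (0::real))" for i
  have sq: "(1 / sqrt s)^2 = 1 / s" using s0 by (simp add: power_divide)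
  have nw0: "(norm w0)^2 = \<epsilon> / c * (1 / (200 * ln (50 * K))) * trace X"
  proof -
    have "(norm w0)^2 = (1 / s) * (norm w)^2" unfolding w0_def using s0
      by (simp add: power_mult_distrib power_divide)
    also have "\<dots> = (1 / s) * (\<epsilon> / c * trace X)"
      unfolding w(1) t'_def sum_distrib_left[symmetric] F(6) ..
    finally show ?thesis by (simp add: s_def)
  qed
  have feas: "w0 \<bullet> (H i *v w0) \<le> b' i * \<epsilon> + (1 - b' i)" if i: "i \<in> {1..M}" for i
  proof -
    have "w0 \<bullet> (H i *v w0) = (1 / s) * (w \<bullet> (H i *v w))" unfolding w0_def using s0
      by (simp add: matrix_vector_mult_scaleR power2_eq_square[symmetric] sq)
    also have "\<dots> \<le> (1 / s) * (s * (\<Sum>v\<in>F. t' v * (v \<bullet> (H i *v v))))"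
      using w(2) i s0 by (intro mult_left_mono) auto
    also have "\<dots> = \<epsilon> / c * trace (H i ** X)"
    proof -
      have "(\<Sum>v\<in>F. t' v * (v \<bullet> (H i *v v))) = \<epsilon> / c * (\<Sum>v\<in>F. t v * (v \<bullet> (H i *v v)))"
        unfolding t'_def sum_distrib_left by (simp add: mult.assoc)
      thus ?thesis using s0 F(7) i by simp
    qed
    finally have A: "w0 \<bullet> (H i *v w0) \<le> \<epsilon> / c * trace (H i ** X)" .
    have tri: "trace (H i ** X) \<le> 1 - (1 - \<epsilon>) * \<beta> i" using tr i by (simp add: algebra_simps)
    have ec: "\<epsilon> / c > 0" using e c0 by simp
    show ?thesis
    proof (cases "i \<in> S")
      case True
      hence "\<beta> i \<ge> th" using S(3) by (simp add: th_def)
      hence "(1 - \<epsilon>) * th \<le> (1 - \<epsilon>) * \<beta> i" using e by (intro mult_left_mono) auto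
      hence "trace (H i ** X) \<le> c" using tri c_th by simp
      hence "\<epsilon> / c * trace (H i ** X) \<le> \<epsilon> / c * c" using ec by (intro mult_left_mono) auto
      thus ?thesis using A True c0 by (simp add: b'_def)
    next
      case False
      have "trace (H i ** X) \<le> 1" using tri b i e by (smt (verit) mult_nonneg_nonneg)
      hence "\<epsilon> / c * trace (H i ** X) \<le> \<epsilon> / c * 1" using ec by (intro mult_left_mono) auto
      also have "\<epsilon> / c \<le> 1" using ce c0 by simp
      finally show ?thesis using A False by (simp add: b'_def)
    qed
  qed
  have sb': "(\<Sum>i=1..M. b' i) = real Q"
  proof -
    have "(\<Sum>i=1..M. b' i) = (\<Sum>i\<in>{1..M}. if i \<in> S then 1 else 0)" by (simp add: b'_def)
    also have "\<dots> = real (card ({1..M} \<inter> S))" by (simp add: sum.If_cases)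
    also have "{1..M} \<inter> S = S" using S(1) by auto
    finally show ?thesis using S(2) by simp
  qed
  have mem: "(w0, b') \<in> {(w :: real^'n, \<beta> :: nat \<Rightarrow> real).
        (\<forall>i\<in>{1..M}. \<beta> i \<in> {0, 1}) \<and>
        (\<forall>i\<in>{1..M}. w \<bullet> (H i *v w) \<le> \<beta> i * \<epsilon> + (1 - \<beta> i)) \<and>
        (\<Sum>i=1..M. \<beta> i) = real Q}"
    using feas sb' by (auto simp: b'_def)
  show ?thesis unfolding vQP_def
    by (rule SUP_upper2[OF mem]) (simp add: nw0)
qed

theorem theorem3p3:
  fixes H :: "nat \<Rightarrow> real^'n^'n" and M Q :: nat and \<epsilon> :: real
  assumes "CARD('n) \<ge> 2"
    and "M \<ge> 2" and "1 \<le> Q" and "Q \<le> M - 1"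
    and "0 < \<epsilon>" and "\<epsilon> < 1"
    and "\<forall>i\<in>{1..M}. psd (H i)"
  shows "let K = (\<Sum>i=1..M. min (real (rank (H i))) (sqrt (2 * real M)));
             c = 1 - (1 - \<epsilon>) / (real M - real Q + 1)
         in vQP H M Q \<epsilon> \<ge> ereal (\<epsilon> / c * (1 / (200 * ln (50 * K)))) * vSDP H M Q \<epsilon>"
proof -
  define K where "K = (\<Sum>i=1..M. min (real (rank (H i))) (sqrt (2 * real M)))"
  define c where "c = 1 - (1 - \<epsilon>) / (real M - real Q + 1)"
  define coef where "coef = \<epsilon> / c * (1 / (200 * ln (50 * K)))"
  define Fs where "Fs = {(X :: real^'n^'n, \<beta> :: nat \<Rightarrow> real).
        psd X \<and>
        (\<forall>i\<in>{1..M}. 0 \<le> \<beta> i \<and> \<beta> i \<le> 1) \<and>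
        (\<forall>i\<in>{1..M}. trace (H i ** X) \<le> \<beta> i * \<epsilon> + (1 - \<beta> i)) \<and>
        (\<Sum>i=1..M. \<beta> i) = real Q}"
  have vS: "vSDP H M Q \<epsilon> = (SUP p\<in>Fs. ereal (trace (fst p)))" by (simp add: vSDP_def Fs_def)
  have c0: "c > 0"
  proof -
    have "real Q + 1 \<le> real M" using assms by linarith
    hence "(1 - \<epsilon>) / (real M - real Q + 1) < 1" using assms by (simp add: divide_less_eq)
    thus ?thesis by (simp add: c_def)
  qed
  have z: "(0 :: real^'n^'n, \<lambda>i. real Q / real M) \<in> Fs"
  proof -
    have "psd (0 :: real^'n^'n)" by (simp add: psd_def transpose_def vec_eq_iff)
    moreover have "real Q / real M \<le> 1" using assms by simp
    moreover have "0 \<le> real Q / real M * \<epsilon> + (1 - real Q / real M)"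
      using assms \<open>real Q / real M \<le> 1\<close> by (intro add_nonneg_nonneg) auto
    moreover have "(\<Sum>i=1..M. real Q / real M) = real Q" using assms by simp
    ultimately show ?thesis unfolding Fs_def by (auto simp: trace_def)
  qed
  have Fne: "Fs \<noteq> {}" using z by blast
  have main: "ereal coef * vSDP H M Q \<epsilon> \<le> vQP H M Q \<epsilon>"
  proof (cases "1 < 50 * K")
    case True
    have coef0: "coef \<ge> 0" using True c0 assms by (simp add: coef_def)
    have "ereal coef * vSDP H M Q \<epsilon> = (SUP p\<in>Fs. ereal coef * ereal (trace (fst p)))"
      unfolding vS by (rule Sup_ereal_mult_left'[OF Fne coef0])
    also have "\<dots> \<le> vQP H M Q \<epsilon>"
    proof (rule SUP_least)
      fix p assume "p \<in> Fs"
      then obtain X \<beta> where p: "p = (X, \<beta>)" "psd X" "\<forall>i\<in>{1..M}. 0 \<le> \<beta> i \<and> \<beta> i \<le> 1"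
        "\<forall>i\<in>{1..M}. trace (H i ** X) \<le> \<beta> i * \<epsilon> + (1 - \<beta> i)" "(\<Sum>i=1..M. \<beta> i) = real Q"
        unfolding Fs_def by auto
      have "ereal (\<epsilon> / c * (1 / (200 * ln (50 * K))) * trace X) \<le> vQP H M Q \<epsilon>"
        by (rule point_bound[OF assms(2-7) p(2-5) K_def c_def True])
      thus "ereal coef * ereal (trace (fst p)) \<le> vQP H M Q \<epsilon>" using p(1) by (simp add: coef_def)
    qed
    finally show ?thesis .
  next
    case False
    have K0: "K \<ge> 0" unfolding K_def by (intro sum_nonneg) simp
    have "ln (50 * K) \<le> 0"
    proof (cases "K = 0")
      case True thus ?thesis by simp
    next
      case False thus ?thesis using K0 \<open>\<not> 1 < 50 * K\<close> by simp
    qed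
    hence d: "c * (200 * ln (50*K)) \<le> 0" using c0 by (intro mult_nonneg_nonpos) auto
    have "\<epsilon> / (c * (200 * ln (50 * K))) \<le> 0" using d assms by (intro divide_nonneg_nonpos) auto
    hence coef0: "coef \<le> 0" by (simp add: coef_def)
    have vS0: "vSDP H M Q \<epsilon> \<ge> 0" unfolding vS
      by (rule SUP_upper2[OF z]) (simp add: trace_def)
    have "ereal coef * vSDP H M Q \<epsilon> \<le> 0"
      using coef0 vS0 by (cases "vSDP H M Q \<epsilon>") (auto simp: mult_nonpos_nonneg)
    also have "0 \<le> vQP H M Q \<epsilon>"
    proof -
      define b where "b i = (if i \<le> Q then 1 else (0::real))" for i
      have "(\<Sum>i=1..M. b i) = real Q"
      proof -
        have "(\<Sum>i=1..M. b i) = (\<Sum>i\<in>{1..Q}. b i)"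
          using assms by (intro sum.mono_neutral_right) (auto simp: b_def)
        also have "\<dots> = (\<Sum>i\<in>{1..Q}. 1)" by (intro sum.cong refl) (auto simp: b_def)
        finally show ?thesis by simp
      qed
      hence "(0 :: real^'n, b) \<in> {(w :: real^'n, \<beta> :: nat \<Rightarrow> real).
        (\<forall>i\<in>{1..M}. \<beta> i \<in> {0, 1}) \<and>
        (\<forall>i\<in>{1..M}. w \<bullet> (H i *v w) \<le> \<beta> i * \<epsilon> + (1 - \<beta> i)) \<and>
        (\<Sum>i=1..M. \<beta> i) = real Q}"
        using assms by (auto simp: b_def)
      thus ?thesis unfolding vQP_def by (rule SUP_upper2) simp
    qed
    finally show ?thesis .
  qed
  thus ?thesis unfolding Let_def K_def[symmetric] c_def[symmetric] coef_def[symmetric] by simp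
qed

end
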